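(* Suppose $s_0,\dots,s_7\in\sum\mathbb{R}(x,y,z)^2$ satisfy $$s_0\,xy+s_1\,z=s_2+s_3\,x+s_4\,y+s_5\,xz+s_6\,yz+s_7\,xyz.$$ Then $s_i=0$ for all $i=0,\dots,7$.
   Context: $\mathbb{R}(x,y,z)$ is the field of rational functions in three real variables and $\sum\mathbb{R}(x,y,z)^2$ is the set of finite sums of squares of its elements. *)

theory Defs
  imports "HOL-Computational_Algebra.Polynomial" "HOL-Computational_Algebra.Fraction_Field"
begin

text \<open>Real polynomials in three variables x, y, z, realised as iterated univariate
  polynomials: z is the outermost variable, then y, then x (innermost).\<close>
type_synonym rpoly3 = "real poly poly poly"

type_synonym rfun3 = "rpoly3 fract"

definition polyX :: rpoly3 where "polyX = [:[:[:0, 1:]:]:]"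
definition polyY :: rpoly3 where "polyY = [:[:0, 1:]:]"
definition polyZ :: rpoly3 where "polyZ = [:0, 1:]"

definition varX :: rfun3 where "varX = Fract polyX 1"
definition varY :: rfun3 where "varY = Fract polyY 1"
definition varZ :: rfun3 where "varZ = Fract polyZ 1"

definition sos :: "rfun3 set" where
  "sos = {f. \<exists>fs :: rfun3 list. f = sum_list (map (\<lambda>g. g ^ 2) fs)}"

end

theory Submission
  imports Defs "HOL-Library.Product_Lexorder"
begin

lemma eqdeg_add:
  fixes p q :: "'a::comm_ring_1 poly"
  assumes "degree p = degree q" "lead_coeff p + lead_coeff q \<noteq> 0"
  shows "degree (p + q) = degree p \<and> lead_coeff (p + q) = lead_coeff p + lead_coeff q \<and> p + q \<noteq> 0"
proof -
  have c: "coeff (p+q) (degree p) = lead_coeff p + lead_coeff q" using assms by simp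
  have "degree (p+q) \<le> degree p" using degree_add_le[of p "degree p" q] assms by simp
  moreover have "degree p \<le> degree (p+q)" using c assms(2) le_degree by metis
  ultimately have d: "degree (p+q) = degree p" by simp
  have "p + q \<noteq> 0" using c assms(2) by (metis coeff_0)
  then show ?thesis using c d by simp
qed

definition liftG :: "('a::idom \<Rightarrow> bool) \<Rightarrow> 'a poly \<Rightarrow> bool" where
 "liftG G p \<longleftrightarrow> p = 0 \<or> (even (degree p) \<and> G (lead_coeff p))"

locale goodpred =
  fixes G :: "'a::idom \<Rightarrow> bool"
  assumes gadd: "G a \<Longrightarrow> G b \<Longrightarrow> G (a+b)"
  and gnz: "G a \<Longrightarrow> G b \<Longrightarrow> a \<noteq> 0 \<Longrightarrow> a + b \<noteq> 0"
  and gmult: "G a \<Longrightarrow> G b \<Longrightarrow> G (a*b)"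
  and gsq: "G (a*a)"
begin

lemma lift_add: assumes "liftG G p" "liftG G q"
  shows "liftG G (p+q) \<and> (p \<noteq> 0 \<longrightarrow> p + q \<noteq> 0)"
proof (cases "p = 0 \<or> q = 0")
  case True then show ?thesis using assms by auto
next
  case False
  hence pq: "p \<noteq> 0" "q \<noteq> 0" by auto
  hence gp: "even (degree p)" "G (lead_coeff p)" and gq: "even (degree q)" "G (lead_coeff q)"
    using assms by (auto simp: liftG_def)
  consider "degree p < degree q" | "degree q < degree p" | "degree p = degree q" by linarith
  then show ?thesis
  proof cases
    case 1
    then have "degree (p+q) = degree q" "lead_coeff (p+q) = lead_coeff q"
      by (simp_all add: degree_add_eq_right lead_coeff_add_le coeff_eq_0)
    moreover have "p + q \<noteq> 0" using calculation pq by (metis leading_coeff_0_iff)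
    ultimately show ?thesis using gq pq by (auto simp: liftG_def)
  next
    case 2
    then have "degree (p+q) = degree p" "lead_coeff (p+q) = lead_coeff p"
      using degree_add_eq_left[OF 2] lead_coeff_add_le[of q p] 2 by (simp_all add: add.commute)
    moreover have "p + q \<noteq> 0" using calculation pq by (metis leading_coeff_0_iff)
    ultimately show ?thesis using gp pq by (auto simp: liftG_def)
  next
    case 3
    have "lead_coeff p + lead_coeff q \<noteq> 0" using gnz gp gq pq by simp
    from eqdeg_add[OF 3 this] show ?thesis using gp gq gadd by (auto simp: liftG_def)
  qed
qed

lemma lift_mult: assumes "liftG G p" "liftG G q" shows "liftG G (p*q)"
proof -
  have "lead_coeff (p*q) = lead_coeff p * lead_coeff q" by (rule lead_coeff_mult)
  then show ?thesis using assms by (auto simp: liftG_def degree_mult_eq gmult)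
qed

lemma lift_sq: "liftG G (p*p)"
proof -
  have "lead_coeff (p*p) = lead_coeff p * lead_coeff p" by (rule lead_coeff_mult)
  then show ?thesis by (cases "p = 0") (auto simp: liftG_def degree_mult_eq gsq)
qed

lemma lift_goodpred: "goodpred (liftG G)"
  by unfold_locales (use lift_add lift_mult lift_sq in auto)

end

lemma goodpred0: "goodpred (\<lambda>a::real. a \<ge> 0)"
  by unfold_locales auto

definition good3 :: "rpoly3 \<Rightarrow> bool" where
  "good3 = liftG (liftG (liftG (\<lambda>a::real. a \<ge> 0)))"

lemma goodpred3: "goodpred good3"
  unfolding good3_def
  by (intro goodpred.lift_goodpred goodpred0)

lemma good3_even:
  assumes "good3 p" "p \<noteq> 0"
  shows "even (degree p) \<and> even (degree (lead_coeff p)) \<and> even (degree (lead_coeff (lead_coeff p)))"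
  using assms by (auto simp: good3_def liftG_def)


definition liftE :: "('a::idom \<Rightarrow> 'b) \<Rightarrow> 'a poly \<Rightarrow> nat \<times> 'b" where
  "liftE ex p = (degree p, ex (lead_coeff p))"

locale expred =
  fixes ex :: "'a::idom \<Rightarrow> 'b::linorder"
  assumes edom: "a \<noteq> 0 \<Longrightarrow> (b = 0 \<or> ex b < ex a) \<Longrightarrow> a + b \<noteq> 0 \<and> ex (a+b) = ex a"
  and ele: "ex (a+b) \<le> max (ex a) (ex b)"
  and emin: "ex 0 \<le> ex a"
begin

lemma lift_dom:
  assumes "p \<noteq> 0" "q = 0 \<or> liftE ex q < liftE ex p"
  shows "p + q \<noteq> 0 \<and> liftE ex (p+q) = liftE ex p"
proof (cases "q = 0")
  case True then show ?thesis using assms by simp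
next
  case False
  then have lt: "liftE ex q < liftE ex p" using assms by simp
  then consider "degree q < degree p" | "degree q = degree p" "ex (lead_coeff q) < ex (lead_coeff p)"
    by (auto simp: liftE_def) (metis le_neq_implies_less)
  then show ?thesis
  proof cases
    case 1
    then have "degree (p+q) = degree p" "lead_coeff (p+q) = lead_coeff p"
      using degree_add_eq_left[OF 1] lead_coeff_add_le[of q p] 1 by (simp_all add: add.commute)
    moreover have "p + q \<noteq> 0" using calculation assms(1) by (metis leading_coeff_0_iff)
    ultimately show ?thesis by (simp add: liftE_def)
  next
    case 2
    have "lead_coeff p \<noteq> 0" using assms(1) by simp
    from edom[OF this] 2 have "lead_coeff p + lead_coeff q \<noteq> 0"
        "ex (lead_coeff p + lead_coeff q) = ex (lead_coeff p)" by auto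
    with eqdeg_add[of p q] 2 show ?thesis by (simp add: liftE_def)
  qed
qed

lemma lift_le: "liftE ex (p+q) \<le> max (liftE ex p) (liftE ex q)"
proof -
  consider "degree q < degree p" | "degree p < degree q" | "degree p = degree q" by linarith
  then show ?thesis
  proof cases
    case 1
    then have "degree (p+q) = degree p" "lead_coeff (p+q) = lead_coeff p"
      using degree_add_eq_left[OF 1] lead_coeff_add_le[of q p] 1 by (simp_all add: add.commute)
    then show ?thesis by (simp add: liftE_def)
  next
    case 2
    then have "degree (p+q) = degree q" "lead_coeff (p+q) = lead_coeff q"
      by (simp_all add: degree_add_eq_right lead_coeff_add_le coeff_eq_0)
    then show ?thesis by (simp add: liftE_def)
  next
    case 3
    have dle: "degree (p+q) \<le> degree p" using degree_add_le[of p "degree p" q] 3 by simp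
    show ?thesis
    proof (cases "degree (p+q) < degree p")
      case True then show ?thesis using 3 by (auto simp: liftE_def max_def)
    next
      case False
      then have d: "degree (p+q) = degree p" using dle by simp
      then have "lead_coeff (p+q) = lead_coeff p + lead_coeff q" using 3 by simp
      then have "ex (lead_coeff (p+q)) \<le> max (ex (lead_coeff p)) (ex (lead_coeff q))"
        using ele by simp
      then show ?thesis using d 3 by (auto simp: liftE_def max_def split: if_splits)
    qed
  qed
qed

lemma lift_min: "liftE ex 0 \<le> liftE ex p"
  using emin by (auto simp: liftE_def)

lemma lift_expred: "expred (liftE ex)"
  by unfold_locales (use lift_dom lift_le lift_min in auto)

lemma sum_small:
  assumes "finite I" "\<forall>i\<in>I. t i = 0 \<or> ex (t i) < L"
  shows "sum t I = 0 \<or> ex (sum t I) < L"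
  using assms
proof (induction I rule: finite_induct)
  case empty then show ?case by simp
next
  case (insert i I)
  then have h: "sum t I = 0 \<or> ex (sum t I) < L" "t i = 0 \<or> ex (t i) < L" by auto
  have "sum t (insert i I) = t i + sum t I" using insert by simp
  moreover have "t i + sum t I = 0 \<or> ex (t i + sum t I) < L"
    using h ele[of "t i" "sum t I"] by (auto simp: max_def split: if_splits)
  ultimately show ?case by simp
qed

lemma dominant:
  assumes "finite I"
    and inj: "\<forall>i\<in>I. \<forall>j\<in>I. t i \<noteq> 0 \<longrightarrow> t j \<noteq> 0 \<longrightarrow> ex (t i) = ex (t j) \<longrightarrow> i = j"
    and s: "sum t I = 0"
  shows "\<forall>i\<in>I. t i = 0"
proof (rule ccontr)
  assume nt: "\<not> (\<forall>i\<in>I. t i = 0)"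
  define N where "N = {i\<in>I. t i \<noteq> 0}"
  have N: "finite N" "N \<noteq> {}" using assms(1) nt by (auto simp: N_def)
  define M where "M = Max ((\<lambda>i. ex (t i)) ` N)"
  have "M \<in> (\<lambda>i. ex (t i)) ` N" unfolding M_def using N by (intro Max_in) auto
  then obtain k where k: "k \<in> N" "ex (t k) = M" by auto
  have ub: "\<forall>j\<in>N. ex (t j) \<le> M" unfolding M_def using N by auto
  have "\<forall>j\<in>I-{k}. t j = 0 \<or> ex (t j) < ex (t k)"
  proof
    fix j assume j: "j \<in> I - {k}"
    show "t j = 0 \<or> ex (t j) < ex (t k)"
    proof (cases "t j = 0")
      case False
      then have "j \<in> N" using j by (auto simp: N_def)
      then have "ex (t j) \<le> ex (t k)" using ub k by auto
      moreover have "ex (t j) \<noteq> ex (t k)" using inj j k False by (auto simp: N_def)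
      ultimately show ?thesis by (simp add: order.strict_iff_order)
    qed simp
  qed
  then have "sum t (I-{k}) = 0 \<or> ex (sum t (I-{k})) < ex (t k)"
    using sum_small[of "I-{k}"] assms(1) by auto
  moreover have "t k \<noteq> 0" "k \<in> I" using k by (auto simp: N_def)
  ultimately have "t k + sum t (I-{k}) \<noteq> 0" using edom by blast
  moreover have "sum t I = t k + sum t (I-{k})" using \<open>k \<in> I\<close> assms(1) by (simp add: sum.remove)
  ultimately show False using s by simp
qed

end

lemma expred0: "expred (\<lambda>a::real. 0::nat)"
  by unfold_locales auto

definition ex3 :: "rpoly3 \<Rightarrow> nat \<times> nat \<times> nat \<times> nat" where
  "ex3 = liftE (liftE (liftE (\<lambda>a::real. 0::nat)))"

lemma expred3: "expred ex3"
  unfolding ex3_def by (intro expred.lift_expred expred0)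


definition par :: "rpoly3 \<Rightarrow> bool \<times> bool \<times> bool" where
  "par p = (odd (degree p), odd (degree (lead_coeff p)), odd (degree (lead_coeff (lead_coeff p))))"

fun pxor :: "bool \<times> bool \<times> bool \<Rightarrow> bool \<times> bool \<times> bool \<Rightarrow> bool \<times> bool \<times> bool" where
  "pxor (a,b,c) (d,e,f) = (a \<noteq> d, b \<noteq> e, c \<noteq> f)"

lemma par_mult: assumes "p \<noteq> 0" "q \<noteq> 0" shows "par (p*q) = pxor (par p) (par q)"
proof -
  have l1: "lead_coeff (p*q) = lead_coeff p * lead_coeff q" by (rule lead_coeff_mult)
  have l2: "lead_coeff (lead_coeff p * lead_coeff q) = lead_coeff (lead_coeff p) * lead_coeff (lead_coeff q)" by (rule lead_coeff_mult)
  have nz: "lead_coeff p \<noteq> 0" "lead_coeff q \<noteq> 0" "lead_coeff (lead_coeff p) \<noteq> 0" "lead_coeff (lead_coeff q) \<noteq> 0"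
    using assms by auto
  show ?thesis unfolding par_def l1 l2 using assms nz by (simp add: degree_mult_eq)
qed

lemma par_minus: "par (-p) = par p" by (simp add: par_def)

lemma par_ex3: "ex3 p = ex3 q \<Longrightarrow> par p = par q"
  unfolding ex3_def liftE_def par_def prod.inject by metis

lemma par_good: "good3 p \<Longrightarrow> p \<noteq> 0 \<Longrightarrow> par p = (False, False, False)"
  using good3_even by (simp add: par_def)

lemma parX: "par polyX = (False, False, True)" by (simp add: par_def polyX_def)
lemma parY: "par polyY = (False, True, False)" by (simp add: par_def polyY_def)
lemma parZ: "par polyZ = (True, False, False)" by (simp add: par_def polyZ_def)
lemma nzX: "polyX \<noteq> 0" by (simp add: polyX_def)
lemma nzY: "polyY \<noteq> 0" by (simp add: polyY_def)
lemma nzZ: "polyZ \<noteq> 0" by (simp add: polyZ_def)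

lemma core:
  fixes Q0 Q1 Q2 Q3 Q4 Q5 Q6 Q7 :: rpoly3
  assumes g: "good3 Q0" "good3 Q1" "good3 Q2" "good3 Q3" "good3 Q4" "good3 Q5" "good3 Q6" "good3 Q7"
  and e: "Q0 * polyX * polyY + Q1 * polyZ = Q2 + Q3 * polyX + Q4 * polyY + Q5 * polyX * polyZ
           + Q6 * polyY * polyZ + Q7 * polyX * polyY * polyZ"
  shows "Q0 = 0 \<and> Q1 = 0 \<and> Q2 = 0 \<and> Q3 = 0 \<and> Q4 = 0 \<and> Q5 = 0 \<and> Q6 = 0 \<and> Q7 = 0"
proof -
  define ts where "ts = [Q0 * polyX * polyY, Q1 * polyZ, - Q2, - (Q3 * polyX), - (Q4 * polyY),
     - (Q5 * polyX * polyZ), - (Q6 * polyY * polyZ), - (Q7 * polyX * polyY * polyZ)]"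
  define t where "t i = ts ! i" for i
  define vs where "vs = [(False,True,True),(True,False,False),(False,False,False),(False,False,True),
     (False,True,False),(True,False,True),(True,True,False),(True,True,True)]"
  have cases8: "i < 8 \<Longrightarrow> i = 0 \<or> i = 1 \<or> i = 2 \<or> i = 3 \<or> i = 4 \<or> i = 5 \<or> i = 6 \<or> i = 7" for i :: nat
    by auto
  have "sum t {..<8} = t 0 + t 1 + t 2 + t 3 + t 4 + t 5 + t 6 + t 7"
    by (simp add: numeral_eq_Suc lessThan_Suc)
  also have "\<dots> = 0" using e unfolding t_def ts_def by (simp add: algebra_simps)
  finally have sum0: "sum t {..<8} = 0" .
  have pv: "par (t i) = vs ! i" if i8: "i < 8" and tnz: "t i \<noteq> 0" for i
  proof -
    have nz: "Q \<noteq> 0" if "Q * polyX \<noteq> 0 \<or> Q * polyY \<noteq> 0 \<or> Q * polyZ \<noteq> 0 \<or> Q \<noteq> 0 \<or> - Q \<noteq> 0" for Q :: rpoly3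
      using that by auto
    consider "i = 0" | "i = 1" | "i = 2" | "i = 3" | "i = 4" | "i = 5" | "i = 6" | "i = 7"
      using cases8[OF i8] by blast
    then show ?thesis
    proof cases
      case 1 then have "Q0 \<noteq> 0" using tnz by (auto simp: t_def ts_def)
      then show ?thesis using 1 g by (simp add: t_def ts_def vs_def par_mult par_minus par_good parX parY parZ nzX nzY nzZ)
    next
      case 2 then have "Q1 \<noteq> 0" using tnz by (auto simp: t_def ts_def)
      then show ?thesis using 2 g by (simp add: t_def ts_def vs_def par_mult par_minus par_good parX parY parZ nzX nzY nzZ)
    next
      case 3 then have "Q2 \<noteq> 0" using tnz by (auto simp: t_def ts_def)
      then show ?thesis using 3 g by (simp add: t_def ts_def vs_def par_mult par_minus par_good parX parY parZ nzX nzY nzZ)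
    next
      case 4 then have "Q3 \<noteq> 0" using tnz by (auto simp: t_def ts_def)
      then show ?thesis using 4 g by (simp add: t_def ts_def vs_def par_mult par_minus par_good parX parY parZ nzX nzY nzZ)
    next
      case 5 then have "Q4 \<noteq> 0" using tnz by (auto simp: t_def ts_def)
      then show ?thesis using 5 g by (simp add: t_def ts_def vs_def par_mult par_minus par_good parX parY parZ nzX nzY nzZ)
    next
      case 6 then have "Q5 \<noteq> 0" using tnz by (auto simp: t_def ts_def)
      then show ?thesis using 6 g by (simp add: t_def ts_def vs_def par_mult par_minus par_good parX parY parZ nzX nzY nzZ)
    next
      case 7 then have "Q6 \<noteq> 0" using tnz by (auto simp: t_def ts_def)
      then show ?thesis using 7 g by (simp add: t_def ts_def vs_def par_mult par_minus par_good parX parY parZ nzX nzY nzZ)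
    next
      case 8 then have "Q7 \<noteq> 0" using tnz by (auto simp: t_def ts_def)
      then show ?thesis using 8 g by (simp add: t_def ts_def vs_def par_mult par_minus par_good parX parY parZ nzX nzY nzZ)
    qed
  qed
  have "\<forall>i\<in>{..<8}. t i = 0"
  proof (rule expred.dominant[OF expred3])
    show "\<forall>i\<in>{..<8}. \<forall>j\<in>{..<8}. t i \<noteq> 0 \<longrightarrow> t j \<noteq> 0 \<longrightarrow> ex3 (t i) = ex3 (t j) \<longrightarrow> i = j"
    proof (intro ballI impI)
      fix i j assume ij: "i \<in> {..<8}" "j \<in> {..<8}" "t i \<noteq> 0" "t j \<noteq> 0" "ex3 (t i) = ex3 (t j)"
      have "par (t i) = par (t j)" by (rule par_ex3[OF ij(5)])
      then have "vs ! i = vs ! j" using pv ij by simp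
      moreover have i8: "i < 8" and j8: "j < 8" using ij by auto
      ultimately show "i = j" using cases8[OF i8] cases8[OF j8]
        unfolding vs_def by (elim disjE; simp)
    qed
  qed (use sum0 in auto)
  then have h: "t k = 0" if "k < 8" for k using that by auto
  from h[of 0] h[of 1] h[of 2] h[of 3] h[of 4] h[of 5] h[of 6] h[of 7]
  show ?thesis by (simp add: t_def ts_def nzX nzY nzZ)
qed


lemma good3_add: "good3 a \<Longrightarrow> good3 b \<Longrightarrow> good3 (a+b)"
  using goodpred.gadd[OF goodpred3] by blast
lemma good3_mult: "good3 a \<Longrightarrow> good3 b \<Longrightarrow> good3 (a*b)"
  using goodpred.gmult[OF goodpred3] by blast
lemma good3_sq: "good3 (a*a)"
  using goodpred.gsq[OF goodpred3] by blast
lemma good3_0: "good3 0" by (simp add: good3_def liftG_def)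

lemma Fract1_eq: "Fract (a::'a::idom) 1 = Fract b 1 \<longleftrightarrow> a = b"
  by (simp add: eq_fract)

lemma sos_poly:
  assumes "s \<in> sos"
  shows "\<exists>q P. q \<noteq> 0 \<and> good3 P \<and> s * Fract (q*q) 1 = Fract P 1"
proof -
  obtain fs where s: "s = sum_list (map (\<lambda>g. g ^ 2) fs)" using assms by (auto simp: sos_def)
  have "\<exists>q P. q \<noteq> 0 \<and> good3 P \<and> sum_list (map (\<lambda>g. g ^ 2) fs) * Fract (q*q) 1 = Fract P 1"
  proof (induction fs)
    case Nil
    show ?case by (intro exI[of _ 1] exI[of _ 0]) (simp add: good3_0 Zero_fract_def)
  next
    case (Cons g fs)
    then obtain q P where qP: "q \<noteq> 0" "good3 P" "sum_list (map (\<lambda>g. g ^ 2) fs) * Fract (q*q) 1 = Fract P 1"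
      by blast
    obtain a b where g: "g = Fract a b" "b \<noteq> 0" by (cases g)
    have e1: "g^2 * Fract ((q*b)*(q*b)) 1 = Fract (a*a*(q*q)) 1"
      using g by (simp add: power2_eq_square eq_fract algebra_simps)
    have e2: "sum_list (map (\<lambda>g. g ^ 2) fs) * Fract ((q*b)*(q*b)) 1 = Fract (P*(b*b)) 1"
    proof -
      let ?S = "sum_list (map (\<lambda>g. g ^ 2) fs)"
      have dd: "(q*b)*(q*b) = (q*q)*(b*b)" by (simp add: ac_simps)
      have "?S * Fract ((q*b)*(q*b)) 1 = ?S * (Fract (q*q) 1 * Fract (b*b) 1)"
        by (simp only: dd mult_fract mult_1)
      also have "\<dots> = (?S * Fract (q*q) 1) * Fract (b*b) 1" by (simp only: mult.assoc)
      also have "\<dots> = Fract (P*(b*b)) 1" by (simp only: qP(3) mult_fract mult_1)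
      finally show ?thesis .
    qed
    have "sum_list (map (\<lambda>g. g ^ 2) (g#fs)) * Fract ((q*b)*(q*b)) 1 = Fract (a*a*(q*q) + P*(b*b)) 1"
      using e1 e2 by (simp add: distrib_right)
    moreover have "good3 (a*a*(q*q) + P*(b*b))"
      by (intro good3_add good3_mult good3_sq qP(2))
    moreover have "q*b \<noteq> 0" using qP g by simp
    ultimately show ?case by blast
  qed
  then show ?thesis using s by simp
qed

lemma sos_scale:
  assumes "q \<noteq> 0" "good3 P" "s * Fract (q*q) 1 = Fract P 1" "q dvd D"
  shows "\<exists>P'. good3 P' \<and> s * Fract (D*D) 1 = Fract P' 1"
proof -
  obtain r where D: "D = q * r" using assms(4) by blast
  have dd: "D*D = (q*q)*(r*r)" by (simp add: D ac_simps)
  have "s * Fract (D*D) 1 = s * (Fract (q*q) 1 * Fract (r*r) 1)"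
    by (simp only: dd mult_fract mult_1)
  also have "\<dots> = (s * Fract (q*q) 1) * Fract (r*r) 1" by (simp only: mult.assoc)
  also have "\<dots> = Fract (P*(r*r)) 1" by (simp only: assms(3) mult_fract mult_1)
  finally have "s * Fract (D*D) 1 = Fract (P * (r*r)) 1" .
  moreover have "good3 (P*(r*r))" by (intro good3_mult good3_sq assms(2))
  ultimately show ?thesis by blast
qed

theorem mainTheorem6:
  fixes s0 s1 s2 s3 s4 s5 s6 s7 :: rfun3
  assumes "s0 \<in> sos" "s1 \<in> sos" "s2 \<in> sos" "s3 \<in> sos"
    and "s4 \<in> sos" "s5 \<in> sos" "s6 \<in> sos" "s7 \<in> sos"
    and "s0 * varX * varY + s1 * varZ
         = s2 + s3 * varX + s4 * varY + s5 * varX * varZ + s6 * varY * varZ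
           + s7 * varX * varY * varZ"
  shows "s0 = 0 \<and> s1 = 0 \<and> s2 = 0 \<and> s3 = 0 \<and> s4 = 0 \<and> s5 = 0 \<and> s6 = 0 \<and> s7 = 0"
proof -
  obtain q0 P0 where h0: "q0 \<noteq> 0" "good3 P0" "s0 * Fract (q0*q0) 1 = Fract P0 1" using sos_poly[OF assms(1)] by blast
  obtain q1 P1 where h1: "q1 \<noteq> 0" "good3 P1" "s1 * Fract (q1*q1) 1 = Fract P1 1" using sos_poly[OF assms(2)] by blast
  obtain q2 P2 where h2: "q2 \<noteq> 0" "good3 P2" "s2 * Fract (q2*q2) 1 = Fract P2 1" using sos_poly[OF assms(3)] by blast
  obtain q3 P3 where h3: "q3 \<noteq> 0" "good3 P3" "s3 * Fract (q3*q3) 1 = Fract P3 1" using sos_poly[OF assms(4)] by blast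
  obtain q4 P4 where h4: "q4 \<noteq> 0" "good3 P4" "s4 * Fract (q4*q4) 1 = Fract P4 1" using sos_poly[OF assms(5)] by blast
  obtain q5 P5 where h5: "q5 \<noteq> 0" "good3 P5" "s5 * Fract (q5*q5) 1 = Fract P5 1" using sos_poly[OF assms(6)] by blast
  obtain q6 P6 where h6: "q6 \<noteq> 0" "good3 P6" "s6 * Fract (q6*q6) 1 = Fract P6 1" using sos_poly[OF assms(7)] by blast
  obtain q7 P7 where h7: "q7 \<noteq> 0" "good3 P7" "s7 * Fract (q7*q7) 1 = Fract P7 1" using sos_poly[OF assms(8)] by blast
  define D where "D = q0*q1*q2*q3*q4*q5*q6*q7"
  have Dnz: "D \<noteq> 0" using h0 h1 h2 h3 h4 h5 h6 h7 by (simp add: D_def)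
  define W where "W = Fract (D*D) 1"
  have Wnz: "W \<noteq> 0" using Dnz by (simp add: W_def Zero_fract_def eq_fract)
  obtain Q0 where g0: "good3 Q0" "s0 * W = Fract Q0 1"
    using sos_scale[OF h0, of D] unfolding W_def D_def by auto
  obtain Q1 where g1: "good3 Q1" "s1 * W = Fract Q1 1"
    using sos_scale[OF h1, of D] unfolding W_def D_def by auto
  obtain Q2 where g2: "good3 Q2" "s2 * W = Fract Q2 1"
    using sos_scale[OF h2, of D] unfolding W_def D_def by auto
  obtain Q3 where g3: "good3 Q3" "s3 * W = Fract Q3 1"
    using sos_scale[OF h3, of D] unfolding W_def D_def by auto
  obtain Q4 where g4: "good3 Q4" "s4 * W = Fract Q4 1"
    using sos_scale[OF h4, of D] unfolding W_def D_def by auto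
  obtain Q5 where g5: "good3 Q5" "s5 * W = Fract Q5 1"
    using sos_scale[OF h5, of D] unfolding W_def D_def by auto
  obtain Q6 where g6: "good3 Q6" "s6 * W = Fract Q6 1"
    using sos_scale[OF h6, of D] unfolding W_def D_def by auto
  obtain Q7 where g7: "good3 Q7" "s7 * W = Fract Q7 1"
    using sos_scale[OF h7, of D] unfolding W_def D_def by auto
  have "(s0 * varX * varY + s1 * varZ) * W
      = (s2 + s3 * varX + s4 * varY + s5 * varX * varZ + s6 * varY * varZ + s7 * varX * varY * varZ) * W"
    using assms(9) by simp
  then have "(s0*W) * varX * varY + (s1*W) * varZ
      = (s2*W) + (s3*W) * varX + (s4*W) * varY + (s5*W) * varX * varZ + (s6*W) * varY * varZ + (s7*W) * varX * varY * varZ"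
    by (simp add: algebra_simps)
  then have "Fract (Q0 * polyX * polyY + Q1 * polyZ) 1 = Fract (Q2 + Q3 * polyX + Q4 * polyY + Q5 * polyX * polyZ
           + Q6 * polyY * polyZ + Q7 * polyX * polyY * polyZ) 1"
    unfolding g0 g1 g2 g3 g4 g5 g6 g7 varX_def varY_def varZ_def by simp
  then have "Q0 * polyX * polyY + Q1 * polyZ = Q2 + Q3 * polyX + Q4 * polyY + Q5 * polyX * polyZ
           + Q6 * polyY * polyZ + Q7 * polyX * polyY * polyZ" by (simp add: Fract1_eq)
  from core[OF g0(1) g1(1) g2(1) g3(1) g4(1) g5(1) g6(1) g7(1) this]
  have "Q0 = 0 \<and> Q1 = 0 \<and> Q2 = 0 \<and> Q3 = 0 \<and> Q4 = 0 \<and> Q5 = 0 \<and> Q6 = 0 \<and> Q7 = 0" .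
  then have "s0 * W = 0 \<and> s1 * W = 0 \<and> s2 * W = 0 \<and> s3 * W = 0 \<and> s4 * W = 0 \<and> s5 * W = 0 \<and> s6 * W = 0 \<and> s7 * W = 0"
    using g0 g1 g2 g3 g4 g5 g6 g7 by (simp add: Zero_fract_def)
  then show ?thesis using Wnz by simp
qed

end
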